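(* Let $K\in\{1,2,3,4\}$, let $n_0\ge 0$, and let $\alpha_1,\dots,\alpha_K\ge 0$ and $\beta_1,\dots,\beta_K>0$ be real numbers. Consider the linear function $f(x_1,\dots,x_K)=\sum_{k=1}^{K}\alpha_k x_k$ of real variables $x_1,\dots,x_K$, subject to the constraints $$\Big|\sum_{k\in\mathcal{K}}\beta_k x_k\Big|\le n_0\sqrt{\sum_{k\in\mathcal{K}}\beta_k}\quad\text{for every nonempty } \mathcal{K}\subseteq\{1,2,\dots,K\}.$$ Set $\gamma_k=\alpha_k/\beta_k$ and choose a permutation $\sigma$ of $\{1,\dots,K\}$ such that $\gamma_{\sigma(1)}\le\gamma_{\sigma(2)}\le\dots\le\gamma_{\sigma(K)}$; write $\tilde\gamma_k=\gamma_{\sigma(k)}$, $\tilde\alpha_k=\alpha_{\sigma(k)}$, $\tilde\beta_k=\beta_{\sigma(k)}$, $\tilde x_k=x_{\sigma(k)}$, and $\tilde\gamma_0=0$. Then the maximum of $f$ over the feasible set is $$f_{\max}=\mathcal{F}(K,n_0,V_\alpha,V_\beta):=n_0\sum_{n=1}^{K}(\tilde\gamma_n-\tilde\gamma_{n-1})\sqrt{\sum_{k=n}^{K}\tilde\beta_k},$$ where $V_\alpha=[\alpha_1,\dots,\alpha_K]$, $V_\beta=[\beta_1,\dots,\beta_K]$, and it is attained at the feasible point given by $\tilde x_k=\tilde x_k^{*}$, where $$\tilde x_k^{*}=\frac{n_0}{\tilde\beta_k}\left(\sqrt{\sum_{n=k}^{K}\tilde\beta_n}-\sqrt{\sum_{n=k+1}^{K}\tilde\beta_n}\right),\quad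 k=1,\dots,K$$ (an empty sum being $0$). Moreover, the minimum of $f$ over the feasible set is $f_{\min}=-f_{\max}=-\mathcal{F}(K,n_0,V_\alpha,V_\beta)$, attained at $\tilde x_k=-\tilde x_k^{*}$, $k=1,\dots,K$. *)

theory Defs
  imports "HOL-Analysis.Analysis" "HOL-Combinatorics.Permutations"
begin

text \<open>Vectors indexed by 1..K are represented as functions nat => real; only
  values at indices 1..K matter.\<close>

definition lin_obj :: "nat \<Rightarrow> (nat \<Rightarrow> real) \<Rightarrow> (nat \<Rightarrow> real) \<Rightarrow> real" where
  "lin_obj K \<alpha> x = (\<Sum>k=1..K. \<alpha> k * x k)"

definition feasible :: "nat \<Rightarrow> real \<Rightarrow> (nat \<Rightarrow> real) \<Rightarrow> (nat \<Rightarrow> real) \<Rightarrow> bool" where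
  "feasible K n0 \<beta> x \<longleftrightarrow>
     (\<forall>S. S \<subseteq> {1..K} \<and> S \<noteq> {} \<longrightarrow>
        \<bar>\<Sum>k\<in>S. \<beta> k * x k\<bar> \<le> n0 * sqrt (\<Sum>k\<in>S. \<beta> k))"

definition gamma_tilde :: "(nat \<Rightarrow> real) \<Rightarrow> (nat \<Rightarrow> real) \<Rightarrow> (nat \<Rightarrow> nat) \<Rightarrow> nat \<Rightarrow> real" where
  "gamma_tilde \<alpha> \<beta> \<sigma> n = (if n = 0 then 0 else \<alpha> (\<sigma> n) / \<beta> (\<sigma> n))"

definition Fval :: "nat \<Rightarrow> real \<Rightarrow> (nat \<Rightarrow> real) \<Rightarrow> (nat \<Rightarrow> real) \<Rightarrow> (nat \<Rightarrow> nat) \<Rightarrow> real" where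
  "Fval K n0 \<alpha> \<beta> \<sigma> =
     n0 * (\<Sum>n=1..K. (gamma_tilde \<alpha> \<beta> \<sigma> n - gamma_tilde \<alpha> \<beta> \<sigma> (n - 1))
                      * sqrt (\<Sum>k=n..K. \<beta> (\<sigma> k)))"

definition xstar_tilde :: "nat \<Rightarrow> real \<Rightarrow> (nat \<Rightarrow> real) \<Rightarrow> (nat \<Rightarrow> nat) \<Rightarrow> nat \<Rightarrow> real" where
  "xstar_tilde K n0 \<beta> \<sigma> k =
     n0 / \<beta> (\<sigma> k) * (sqrt (\<Sum>n=k..K. \<beta> (\<sigma> n)) - sqrt (\<Sum>n=k+1..K. \<beta> (\<sigma> n)))"

end

theory Submission imports Defs begin

lemma sqrt_conc:
  fixes s t c :: real
  assumes "0 \<le> s" "s \<le> t" "0 \<le> c"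
  shows "sqrt (t + c) - sqrt t \<le> sqrt (s + c) - sqrt s"
proof -
  have "(sqrt (t + c) + sqrt s)^2 \<le> (sqrt (s + c) + sqrt t)^2"
  proof -
    have "(t + c) * s \<le> (s + c) * t" using assms by (simp add: algebra_simps mult_left_mono)
    hence "sqrt ((t + c) * s) \<le> sqrt ((s + c) * t)" by simp
    moreover have "(sqrt (t + c) + sqrt s)^2 = (sqrt (t+c))^2 + (sqrt s)^2 + 2 * sqrt (t+c) * sqrt s"
      by (rule power2_sum)
    moreover have "(sqrt (s + c) + sqrt t)^2 = (sqrt (s+c))^2 + (sqrt t)^2 + 2 * sqrt (s+c) * sqrt t"
      by (rule power2_sum)
    moreover have "(sqrt (t+c))^2 = t + c" "(sqrt s)^2 = s" "(sqrt (s+c))^2 = s + c" "(sqrt t)^2 = t"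
      using assms by auto
    moreover have "sqrt (t+c) * sqrt s = sqrt ((t + c) * s)" "sqrt (s+c) * sqrt t = sqrt ((s + c) * t)"
      by (simp_all only: real_sqrt_mult)
    ultimately show ?thesis by linarith
  qed
  hence "sqrt (t + c) + sqrt s \<le> sqrt (s + c) + sqrt t"
  proof (rule power2_le_imp_le)
    show "0 \<le> sqrt (s + c) + sqrt t" using assms by simp
  qed
  thus ?thesis by simp
qed

lemma telesc:
  fixes h :: "nat \<Rightarrow> real"
  assumes "n \<le> Suc K"
  shows "(\<Sum>k=n..K. h k - h (Suc k)) = h n - h (Suc K)"
  using sum_Suc_diff[OF assms, of "\<lambda>k. - h k"] by simp

lemma telG:
  fixes G :: "nat \<Rightarrow> real"
  shows "(\<Sum>n=1..k. G n - G (n-1)) = G k - G 0"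
  by (induction k) auto

lemma abel:
  fixes G c :: "nat \<Rightarrow> real"
  assumes "G 0 = 0"
  shows "(\<Sum>k=1..K. G k * c k) = (\<Sum>n=1..K. (G n - G (n-1)) * (\<Sum>k=n..K. c k))"
proof (induction K)
  case 0 then show ?case by simp
next
  case (Suc K)
  have tel: "(\<Sum>n=1..Suc K. G n - G (n-1)) = G (Suc K)"
    using telG[of G "Suc K"] assms by simp
  have "(\<Sum>n=1..Suc K. (G n - G (n-1)) * (\<Sum>k=n..Suc K. c k))
      = (\<Sum>n=1..Suc K. (G n - G (n-1)) * (\<Sum>k=n..K. c k) + (G n - G (n-1)) * c (Suc K))"
    by (intro sum.cong refl) (auto simp add: atLeastAtMostSuc_conv algebra_simps)
  also have "\<dots> = (\<Sum>n=1..K. (G n - G (n-1)) * (\<Sum>k=n..K. c k)) + G (Suc K) * c (Suc K)"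
  proof -
    have "(\<Sum>n=1..Suc K. (G n - G (n-1)) * c (Suc K)) = G (Suc K) * c (Suc K)"
      by (simp only: sum_distrib_right[symmetric] tel)
    moreover have "(\<Sum>n=1..Suc K. (G n - G (n-1)) * (\<Sum>k=n..K. c k))
        = (\<Sum>n=1..K. (G n - G (n-1)) * (\<Sum>k=n..K. c k))" by simp
    ultimately show ?thesis by (simp only: sum.distrib)
  qed
  finally show ?case using Suc by simp
qed

lemma key:
  fixes b :: "nat \<Rightarrow> real"
  assumes nonneg: "\<And>k. k \<in> {m0..K} \<Longrightarrow> b k \<ge> 0" and "m0 \<le> m" and "m \<le> Suc K"
  shows "\<forall>J. J \<subseteq> {m..K} \<longrightarrow> (\<Sum>j\<in>J. sqrt (\<Sum>n=j..K. b n) - sqrt (\<Sum>n=Suc j..K. b n)) \<le> sqrt (\<Sum>j\<in>J. b j)"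
  using assms(3,2)
proof (induction m rule: inc_induct)
  case base
  then show ?case by auto
next
  case (step n)
  show ?case
  proof (intro allI impI)
    fix J assume J: "J \<subseteq> {n..K}"
    show "(\<Sum>j\<in>J. sqrt (\<Sum>n=j..K. b n) - sqrt (\<Sum>n=Suc j..K. b n)) \<le> sqrt (\<Sum>j\<in>J. b j)"
    proof (cases "n \<in> J")
      case False
      have "J \<subseteq> {Suc n..K}"
      proof
        fix x assume x: "x \<in> J"
        hence "x \<in> {n..K}" "x \<noteq> n" using J False by auto
        thus "x \<in> {Suc n..K}" by auto
      qed
      thus ?thesis using step by auto
    next
      case True
      define J' where "J' = J - {n}"
      have J': "J' \<subseteq> {Suc n..K}" using J unfolding J'_def by auto
      have fin: "finite J" using J finite_subset by blast
      have bn: "b n \<ge> 0" using nonneg step by auto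
      define T where "T = (\<Sum>k=Suc n..K. b k)"
      define s where "s = (\<Sum>j\<in>J'. b j)"
      have s0: "0 \<le> s" unfolding s_def using J' nonneg step by (intro sum_nonneg) auto
      have sT: "s \<le> T" unfolding s_def T_def using J' nonneg step
        by (intro sum_mono2) auto
      have Tn: "(\<Sum>k=n..K. b k) = T + b n" unfolding T_def using step
        by (simp add: sum.atLeast_Suc_atMost)
      have IH: "(\<Sum>j\<in>J'. sqrt (\<Sum>n=j..K. b n) - sqrt (\<Sum>n=Suc j..K. b n)) \<le> sqrt s"
        using step J' unfolding s_def by auto
      have "(\<Sum>j\<in>J. sqrt (\<Sum>n=j..K. b n) - sqrt (\<Sum>n=Suc j..K. b n))
          = (sqrt (T + b n) - sqrt T) + (\<Sum>j\<in>J'. sqrt (\<Sum>n=j..K. b n) - sqrt (\<Sum>n=Suc j..K. b n))"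
        unfolding J'_def using fin True Tn T_def by (simp add: sum.remove)
      also have "\<dots> \<le> (sqrt (s + b n) - sqrt s) + sqrt s"
        using sqrt_conc[OF s0 sT bn] IH by linarith
      also have "\<dots> = sqrt (\<Sum>j\<in>J. b j)"
        unfolding s_def J'_def using fin True by (simp add: sum.remove add.commute)
      finally show ?thesis .
    qed
  qed
qed


lemma feasible_neg: "feasible K n0 \<beta> (\<lambda>k. - x k) = feasible K n0 \<beta> x"
  unfolding feasible_def by (simp add: sum_negf)

lemma lin_obj_neg: "lin_obj K \<alpha> (\<lambda>k. - x k) = - lin_obj K \<alpha> x"
  unfolding lin_obj_def by (simp add: sum_negf)

theorem theorem1:
  fixes K :: nat and n0 :: real and \<alpha> \<beta> :: "nat \<Rightarrow> real" and \<sigma> :: "nat \<Rightarrow> nat"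
  assumes "K \<in> {1,2,3,4}"
    and "n0 \<ge> 0"
    and "\<And>k. k \<in> {1..K} \<Longrightarrow> \<alpha> k \<ge> 0"
    and "\<And>k. k \<in> {1..K} \<Longrightarrow> \<beta> k > 0"
    and "\<sigma> permutes {1..K}"
    and "\<And>i j. i \<in> {1..K} \<Longrightarrow> j \<in> {1..K} \<Longrightarrow> i \<le> j \<Longrightarrow>
           \<alpha> (\<sigma> i) / \<beta> (\<sigma> i) \<le> \<alpha> (\<sigma> j) / \<beta> (\<sigma> j)"
  shows "(\<forall>x. feasible K n0 \<beta> x \<longrightarrow> lin_obj K \<alpha> x \<le> Fval K n0 \<alpha> \<beta> \<sigma>)
       \<and> (\<forall>x. (\<forall>k\<in>{1..K}. x (\<sigma> k) = xstar_tilde K n0 \<beta> \<sigma> k) \<longrightarrow>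
              feasible K n0 \<beta> x \<and> lin_obj K \<alpha> x = Fval K n0 \<alpha> \<beta> \<sigma>)
       \<and> (\<forall>x. feasible K n0 \<beta> x \<longrightarrow> - Fval K n0 \<alpha> \<beta> \<sigma> \<le> lin_obj K \<alpha> x)
       \<and> (\<forall>x. (\<forall>k\<in>{1..K}. x (\<sigma> k) = - xstar_tilde K n0 \<beta> \<sigma> k) \<longrightarrow>
              feasible K n0 \<beta> x \<and> lin_obj K \<alpha> x = - Fval K n0 \<alpha> \<beta> \<sigma>)"
proof -
  note perm = assms(5)
  define b where "b k = \<beta> (\<sigma> k)" for k
  define G where "G = gamma_tilde \<alpha> \<beta> \<sigma>"
  define T where "T n = (\<Sum>k=n..K. b k)" for n
  have sig_in: "\<sigma> k \<in> {1..K} \<longleftrightarrow> k \<in> {1..K}" for k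
    using permutes_in_image[OF perm] .
  have bpos: "b k > 0" if "k \<in> {1..K}" for k
    unfolding b_def using assms(4) sig_in that by blast
  have bij: "bij_betw \<sigma> {1..K} {1..K}" using permutes_imp_bij[OF perm] .
  have inj: "inj_on \<sigma> A" for A using permutes_inj_on[OF perm] .
  have G0: "G 0 = 0" unfolding G_def gamma_tilde_def by simp
  have Gk: "G k = \<alpha> (\<sigma> k) / b k" if "k \<ge> 1" for k
    unfolding G_def gamma_tilde_def b_def using that by simp
  have coef: "G n - G (n - 1) \<ge> 0" if n: "n \<in> {1..K}" for n
  proof (cases "n = 1")
    case True
    have "\<alpha> (\<sigma> 1) \<ge> 0" using assms(3) sig_in n True by blast
    moreover have "b 1 > 0" using bpos n True by blast
    ultimately show ?thesis using True G0 Gk[of 1] by simp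
  next
    case False
    hence n2: "n - 1 \<ge> 1" "n - 1 \<le> K" "n - 1 \<le> n" using n by auto
    have "G (n-1) \<le> G n" using assms(6)[of "n-1" n] n n2 Gk[of n] Gk[of "n-1"]
      unfolding b_def by auto
    thus ?thesis by simp
  qed
  have lin: "lin_obj K \<alpha> x = (\<Sum>n=1..K. (G n - G (n-1)) * (\<Sum>k=n..K. b k * x (\<sigma> k)))" for x
  proof -
    have "lin_obj K \<alpha> x = (\<Sum>k=1..K. \<alpha> (\<sigma> k) * x (\<sigma> k))"
      unfolding lin_obj_def using sum.reindex_bij_betw[OF bij, of "\<lambda>k. \<alpha> k * x k"] by simp
    also have "\<dots> = (\<Sum>k=1..K. G k * (b k * x (\<sigma> k)))"
    proof (intro sum.cong refl)
      fix k assume k: "k \<in> {1..K}"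
      have "b k > 0" using bpos k by blast
      thus "\<alpha> (\<sigma> k) * x (\<sigma> k) = G k * (b k * x (\<sigma> k))" using Gk[of k] k by auto
    qed
    also have "\<dots> = (\<Sum>n=1..K. (G n - G (n-1)) * (\<Sum>k=n..K. b k * x (\<sigma> k)))"
      by (rule abel[of G, OF G0])
    finally show ?thesis .
  qed
  have Fv: "Fval K n0 \<alpha> \<beta> \<sigma> = (\<Sum>n=1..K. (G n - G (n-1)) * (n0 * sqrt (T n)))"
    unfolding Fval_def G_def T_def b_def by (simp add: sum_distrib_left algebra_simps)
  have reix: "(\<Sum>k\<in>J. b k * x (\<sigma> k)) = (\<Sum>i\<in>\<sigma> ` J. \<beta> i * x i)"
     "(\<Sum>k\<in>J. b k) = (\<Sum>i\<in>\<sigma> ` J. \<beta> i)" for J x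
    unfolding b_def by (simp_all add: sum.reindex[OF inj])
  have part1: "lin_obj K \<alpha> x \<le> Fval K n0 \<alpha> \<beta> \<sigma>" if fx: "feasible K n0 \<beta> x" for x
  proof -
    have step: "(\<Sum>k=n..K. b k * x (\<sigma> k)) \<le> n0 * sqrt (T n)" if n: "n \<in> {1..K}" for n
    proof -
      have sub: "\<sigma> ` {n..K} \<subseteq> {1..K}"
      proof (rule image_subsetI)
        fix k assume "k \<in> {n..K}"
        hence "k \<in> {1..K}" using n by simp
        thus "\<sigma> k \<in> {1..K}" using sig_in by blast
      qed
      have ne: "\<sigma> ` {n..K} \<noteq> {}" using n by simp
      have "\<bar>\<Sum>i\<in>\<sigma> ` {n..K}. \<beta> i * x i\<bar> \<le> n0 * sqrt (\<Sum>i\<in>\<sigma> ` {n..K}. \<beta> i)"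
        using fx[unfolded feasible_def, rule_format, OF conjI[OF sub ne]] .
      thus ?thesis unfolding T_def reix by linarith
    qed
    have "(\<Sum>n=1..K. (G n - G (n-1)) * (\<Sum>k=n..K. b k * x (\<sigma> k)))
        \<le> (\<Sum>n=1..K. (G n - G (n-1)) * (n0 * sqrt (T n)))"
    proof (rule sum_mono)
      fix n assume n: "n \<in> {1..K}"
      show "(G n - G (n-1)) * (\<Sum>k=n..K. b k * x (\<sigma> k)) \<le> (G n - G (n-1)) * (n0 * sqrt (T n))"
        by (rule mult_left_mono[OF step[OF n] coef[OF n]])
    qed
    thus ?thesis using lin Fv by simp
  qed
  have part2: "feasible K n0 \<beta> x \<and> lin_obj K \<alpha> x = Fval K n0 \<alpha> \<beta> \<sigma>"
    if xs: "\<forall>k\<in>{1..K}. x (\<sigma> k) = xstar_tilde K n0 \<beta> \<sigma> k" for x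
  proof -
    define d where "d k = sqrt (T k) - sqrt (T (Suc k))" for k
    have bx: "b k * x (\<sigma> k) = n0 * d k" if "k \<in> {1..K}" for k
    proof -
      have e1: "x (\<sigma> k) = xstar_tilde K n0 \<beta> \<sigma> k" using xs that by blast
      have e2: "xstar_tilde K n0 \<beta> \<sigma> k = n0 / b k * d k"
        unfolding xstar_tilde_def d_def T_def b_def by (simp only: Suc_eq_plus1)
      have bne: "b k \<noteq> 0" using bpos[OF that] by linarith
      show ?thesis unfolding e1 e2 using bne by (simp add: field_simps)
    qed
    have TSK: "T (Suc K) = 0" unfolding T_def by simp
    have tail: "(\<Sum>k=n..K. b k * x (\<sigma> k)) = n0 * sqrt (T n)" if n: "n \<in> {1..K}" for n
    proof -
      have "(\<Sum>k=n..K. b k * x (\<sigma> k)) = (\<Sum>k=n..K. n0 * d k)"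
        by (intro sum.cong refl) (use n bx in auto)
      also have "\<dots> = n0 * (sqrt (T n) - sqrt (T (Suc K)))"
        unfolding d_def sum_distrib_left[symmetric] using n
        by (subst telesc[of n K "\<lambda>k. sqrt (T k)"]) auto
      finally show ?thesis using TSK by simp
    qed
    have obj: "lin_obj K \<alpha> x = Fval K n0 \<alpha> \<beta> \<sigma>"
      unfolding lin Fv by (intro sum.cong refl) (simp add: tail)
    have "feasible K n0 \<beta> x"
      unfolding feasible_def
    proof (intro allI impI)
      fix S assume S: "S \<subseteq> {1..K} \<and> S \<noteq> {}"
      define J where "J = {j\<in>{1..K}. \<sigma> j \<in> S}"
      have SJ: "S = \<sigma> ` J"
      proof
        show "\<sigma> ` J \<subseteq> S" unfolding J_def by auto
        show "S \<subseteq> \<sigma> ` J"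
        proof
          fix i assume i: "i \<in> S"
          hence "i \<in> {1..K}" using S by auto
          then obtain j where "j \<in> {1..K}" "i = \<sigma> j"
            using permutes_image[OF perm] by (metis imageE)
          thus "i \<in> \<sigma> ` J" unfolding J_def using i by auto
        qed
      qed
      have J1: "J \<subseteq> {1..K}" unfolding J_def by auto
      have dnn: "d k \<ge> 0" if "k \<in> {1..K}" for k
      proof -
        have "T k = b k + T (Suc k)" unfolding T_def using that
          by (simp add: sum.atLeast_Suc_atMost)
        thus ?thesis unfolding d_def using bpos[OF that] by simp
      qed
      have "(\<Sum>i\<in>S. \<beta> i * x i) = (\<Sum>k\<in>J. b k * x (\<sigma> k))" unfolding SJ reix ..
      also have "\<dots> = n0 * (\<Sum>k\<in>J. d k)"
        unfolding sum_distrib_left using J1 bx by (intro sum.cong refl) auto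
      finally have eq: "(\<Sum>i\<in>S. \<beta> i * x i) = n0 * (\<Sum>k\<in>J. d k)" .
      have dsum: "(\<Sum>k\<in>J. d k) \<ge> 0" using J1 dnn by (intro sum_nonneg) auto
      have "(\<Sum>k\<in>J. d k) \<le> sqrt (\<Sum>k\<in>J. b k)"
      proof -
        have bnn: "0 \<le> b k" if "k \<in> {1..K}" for k using bpos[OF that] by linarith
        have "1 \<le> Suc K" by simp
        from key[of 1 K b 1, OF bnn order_refl this] J1 show ?thesis
          unfolding d_def T_def by blast
      qed
      hence "n0 * (\<Sum>k\<in>J. d k) \<le> n0 * sqrt (\<Sum>k\<in>J. b k)"
        using assms(2) by (rule mult_left_mono)
      note calc = this
      have sumeq: "(\<Sum>k\<in>J. b k) = (\<Sum>i\<in>S. \<beta> i)" unfolding SJ reix ..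
      have nn: "n0 * (\<Sum>k\<in>J. d k) \<ge> 0" by (rule mult_nonneg_nonneg[OF assms(2) dsum])
      have ab: "\<bar>\<Sum>i\<in>S. \<beta> i * x i\<bar> = n0 * (\<Sum>k\<in>J. d k)"
        unfolding eq by (rule abs_of_nonneg[OF nn])
      show "\<bar>\<Sum>i\<in>S. \<beta> i * x i\<bar> \<le> n0 * sqrt (\<Sum>i\<in>S. \<beta> i)"
        unfolding ab sumeq[symmetric] by (rule calc)
    qed
    thus ?thesis using obj by blast
  qed
  show ?thesis
  proof (intro conjI allI impI)
    fix x assume "feasible K n0 \<beta> x" thus "lin_obj K \<alpha> x \<le> Fval K n0 \<alpha> \<beta> \<sigma>" by (rule part1)
  next
    fix x assume "\<forall>k\<in>{1..K}. x (\<sigma> k) = xstar_tilde K n0 \<beta> \<sigma> k"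
    thus "feasible K n0 \<beta> x" "lin_obj K \<alpha> x = Fval K n0 \<alpha> \<beta> \<sigma>" using part2 by auto
  next
    fix x assume "feasible K n0 \<beta> x"
    hence "feasible K n0 \<beta> (\<lambda>k. - x k)" by (simp add: feasible_neg)
    from part1[OF this] show "- Fval K n0 \<alpha> \<beta> \<sigma> \<le> lin_obj K \<alpha> x" by (simp add: lin_obj_neg)
  next
    fix x assume "\<forall>k\<in>{1..K}. x (\<sigma> k) = - xstar_tilde K n0 \<beta> \<sigma> k"
    hence "\<forall>k\<in>{1..K}. - x (\<sigma> k) = xstar_tilde K n0 \<beta> \<sigma> k" by simp
    from part2[of "\<lambda>k. - x k", OF this]
    show "feasible K n0 \<beta> x" "lin_obj K \<alpha> x = - Fval K n0 \<alpha> \<beta> \<sigma>"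
      by (simp_all add: feasible_neg lin_obj_neg)
  qed
qed

end
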